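(* Let $L\ge 1$ and $0\le l<m\le L$. For all $\mathbf{i},\mathbf{a}\in B_l$, $\mathbf{j}\in B_m$ and $\mathbf{b}\in B_{m-l}$ one has \[ M(q,t)^{\mathbf{a},\mathbf{b}}_{\mathbf{i},\mathbf{j}} \;=\; S(q,t)^{\mathbf{a},\mathbf{b}}_{\mathbf{i},\mathbf{j}}, \] as formal power series in $q$ with coefficients in $\mathbb{Q}(t)$ (the left side being a rational function of $q,t$, expanded in $q$).
   Context: Notation: $B_l=\{\mathbf{i}=(i_1,\dots,i_L)\in\{0,1\}^L : i_1+\dots+i_L=l\}$; for $\mathbf{x},\mathbf{y}\in\{0,1\}^L$, $\mathbf{x}\le\mathbf{y}$ means $\mathbf{y}-\mathbf{x}\in\mathbb{Z}_{\ge0}^L$; columns are indexed by $\mathbb{Z}_L=\{1,\dots,L\}$ cyclically; $\theta(\text{true})=1,\theta(\text{false})=0$. Two-row pairing weights $M$. Picture $\mathbf{j}\in B_m$ as an upper row of $L$ boxes with a ball in column $k$ iff $j_k=1$, and $\mathbf{i}\in B_l$ as a lower row with a ball in column $k$ iff $i_k=1$. A pairing $\phi$ is an injection from the lower balls to the upper balls built as follows: the lower balls are processed from left to right (increasing column); when processing a lower ball in column $c$, the upper balls not yet chosen are called free; if the upper box in column $c$ holds a free ball, it must be chosen (trivial pairing, weight $1$); otherwise any free upper ball, say in column $c'\neq c$, may be chosen, with weight \[ \frac{(1-t)\,t^{s}\,q^{w}}{1-q\,t^{f}}, \] where $f$ is the number of free upper balls just before this choice, $s$ is the number of free upper balls in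 the columns $c'+1,c'+2,\dots,c-1$ (indices mod $L$, i.e. strictly between going cyclically leftwards from $c$ to $c'$), and $w=1$ if $c<c'$ (wrapping) and $w=0$ if $c'<c$. The weight of $\phi$ is the product of the weights of its $l$ choices. Define \[ M(q,t)^{\mathbf{a},\mathbf{b}}_{\mathbf{i},\mathbf{j}}=\theta(\mathbf{a}+\mathbf{b}=\mathbf{j})\sum_{\phi}\mathrm{wt}(\phi), \] the sum over pairings $\phi$ whose set of chosen upper balls is exactly the set of positions of $1$'s in $\mathbf{a}$. $t$-oscillators: $F=\bigoplus_{d\ge0}\mathbb{Q}(t)|d\rangle$ with $\mathbf{a}^+|d\rangle=|d+1\rangle$, $\mathbf{a}^-|d\rangle=(1-t^d)|d-1\rangle$ ($|-1\rangle=0$), $\mathbf{k}|d\rangle=t^d|d\rangle$, $q^{\mathbf{h}}|d\rangle=q^d|d\rangle$. Five-vertex weights $S^{ab}_{ij}$ ($i$ = left, $a$ = right, $j$ = bottom, $b$ = top edge, all in $\{0,1\}$), valued in operators on $F$: $S^{00}_{00}=1$, $S^{10}_{11}=1$, $S^{01}_{01}=\mathbf{k}$, $S^{10}_{01}=\mathbf{a}^-$, $S^{00}_{10}=\mathbf{a}^+$, and $S^{ab}_{ij}=0$ otherwise. Define \[ S(q,t)^{\mathbf{a},\mathbf{b}}_{\mathbf{i},\mathbf{j}}=(1-q\,t^{m-l})\,\mathrm{tr}_F\bigl(q^{\mathbf{h}}S^{a_1b_1}_{i_1j_1}S^{a_2b_2}_{i_2j_2}\cdots S^{a_Lb_L}_{i_Lj_L}\bigr),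 \] where $\mathrm{tr}_F(A)=\sum_{d\ge0}\langle d|A|d\rangle$ is taken as a formal power series in $q$. *)

theory Defs
  imports "HOL-Computational_Algebra.Polynomial"
          "HOL-Computational_Algebra.Fraction_Field"
          "HOL-Computational_Algebra.Formal_Power_Series"
begin

(* Coefficient field Q(t) = field of fractions of Q[t]; q is the fps variable fps_X. *)
type_synonym K = "rat poly fract"

definition tt :: K where "tt = Fract [:0, 1:] 1"

(* Vectors in {0,1}^L are nat lists of length L; columns are 0..L-1 (0-based). *)
definition Bset :: "nat \<Rightarrow> nat \<Rightarrow> nat list set" where
  "Bset L l = {x. length x = L \<and> set x \<subseteq> {0, 1} \<and> sum_list x = l}"

definition balls :: "nat \<Rightarrow> nat list \<Rightarrow> nat set" where
  "balls L x = {k. k < L \<and> x ! k = 1}"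

definition lower_list :: "nat \<Rightarrow> nat list \<Rightarrow> nat list" where
  "lower_list L x = filter (\<lambda>k. x ! k = 1) [0..<L]"

definition between :: "nat \<Rightarrow> nat \<Rightarrow> nat \<Rightarrow> nat set" where
  "between L c' c = (if c' < c then {c'<..<c} else {c'<..<L} \<union> {..<c})"

(* weight of choosing upper ball c' for lower ball c, free upper balls F *)
definition choice_wt :: "nat \<Rightarrow> nat \<Rightarrow> nat \<Rightarrow> nat set \<Rightarrow> K fps" where
  "choice_wt L c c' F =
     (if c' = c then 1
      else fps_const ((1 - tt) * tt ^ card (F \<inter> between L c' c))
           * fps_X ^ (if c < c' then 1 else 0)
           * inverse (1 - fps_const (tt ^ card F) * fps_X))"

(* a pairing is the list cs of chosen upper columns, cs!k chosen for the k-th lower ball *)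
definition valid_pairing :: "nat \<Rightarrow> nat list \<Rightarrow> nat list \<Rightarrow> nat list \<Rightarrow> bool" where
  "valid_pairing L i j cs \<longleftrightarrow>
     length cs = length (lower_list L i) \<and>
     (\<forall>k < length cs.
        (let F = balls L j - set (take k cs); c = lower_list L i ! k in
           cs ! k \<in> F \<and> (c \<in> F \<longrightarrow> cs ! k = c)))"

definition pairing_wt :: "nat \<Rightarrow> nat list \<Rightarrow> nat list \<Rightarrow> nat list \<Rightarrow> K fps" where
  "pairing_wt L i j cs =
     (\<Prod>k < length cs. choice_wt L (lower_list L i ! k) (cs ! k) (balls L j - set (take k cs)))"

definition Mw :: "nat \<Rightarrow> nat list \<Rightarrow> nat list \<Rightarrow> nat list \<Rightarrow> nat list \<Rightarrow> K fps" where
  "Mw L a b i j =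
     (if (\<forall>k < L. a ! k + b ! k = j ! k)
      then (\<Sum>cs \<in> {cs. valid_pairing L i j cs \<and> set cs = balls L a}. pairing_wt L i j cs)
      else 0)"

(* t-oscillator operators acting on coefficient vectors v (v d = coefficient of |d>) *)
definition aplus :: "(nat \<Rightarrow> K) \<Rightarrow> (nat \<Rightarrow> K)" where
  "aplus v = (\<lambda>d. if d = 0 then 0 else v (d - 1))"

definition aminus :: "(nat \<Rightarrow> K) \<Rightarrow> (nat \<Rightarrow> K)" where
  "aminus v = (\<lambda>d. (1 - tt ^ (d + 1)) * v (d + 1))"

definition kop :: "(nat \<Rightarrow> K) \<Rightarrow> (nat \<Rightarrow> K)" where
  "kop v = (\<lambda>d. tt ^ d * v d)"

(* five-vertex weight S^{ab}_{ij}: i left, a right, j bottom, b top *)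
definition Sv :: "nat \<Rightarrow> nat \<Rightarrow> nat \<Rightarrow> nat \<Rightarrow> (nat \<Rightarrow> K) \<Rightarrow> (nat \<Rightarrow> K)" where
  "Sv a b i j =
     (if (a, b, i, j) = (0, 0, 0, 0) then id
      else if (a, b, i, j) = (1, 0, 1, 1) then id
      else if (a, b, i, j) = (0, 1, 0, 1) then kop
      else if (a, b, i, j) = (1, 0, 0, 1) then aminus
      else if (a, b, i, j) = (0, 0, 1, 0) then aplus
      else (\<lambda>v. (\<lambda>_. 0)))"

definition basis :: "nat \<Rightarrow> nat \<Rightarrow> K" where
  "basis d = (\<lambda>e. if e = d then 1 else 0)"

definition Sprod :: "nat \<Rightarrow> nat list \<Rightarrow> nat list \<Rightarrow> nat list \<Rightarrow> nat list \<Rightarrow> (nat \<Rightarrow> K) \<Rightarrow> (nat \<Rightarrow> K)" where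
  "Sprod L a b i j = foldr (\<circ>) (map (\<lambda>k. Sv (a ! k) (b ! k) (i ! k) (j ! k)) [0..<L]) id"

(* tr_F(q^h A) as fps in q: coefficient of q^d is <d|A|d> *)
definition trace_qh :: "((nat \<Rightarrow> K) \<Rightarrow> (nat \<Rightarrow> K)) \<Rightarrow> K fps" where
  "trace_qh A = Abs_fps (\<lambda>d. A (basis d) d)"

definition Sw :: "nat \<Rightarrow> nat list \<Rightarrow> nat list \<Rightarrow> nat list \<Rightarrow> nat list \<Rightarrow> K fps" where
  "Sw L a b i j =
     (1 - fps_const (tt ^ (sum_list j - sum_list i)) * fps_X) * trace_qh (Sprod L a b i j)"

end

theory Submission
  imports Defs
begin


type_synonym col = "nat \<times> nat \<times> nat \<times> nat"

definition Sc :: "col \<Rightarrow> (nat \<Rightarrow> K) \<Rightarrow> (nat \<Rightarrow> K)" where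
  "Sc c = (case c of (a, b, i, j) \<Rightarrow> Sv a b i j)"

fun opw :: "col list \<Rightarrow> (nat \<Rightarrow> K) \<Rightarrow> (nat \<Rightarrow> K)" where
  "opw [] = id"
| "opw (c # ws) = Sc c \<circ> opw ws"

definition T :: "col list \<Rightarrow> K fps" where "T ws = trace_qh (opw ws)"

lemma opw_append: "opw (xs @ ys) = opw xs \<circ> opw ys"
  by (induction xs) auto

definition lin :: "((nat \<Rightarrow> K) \<Rightarrow> (nat \<Rightarrow> K)) \<Rightarrow> bool" where
  "lin f \<longleftrightarrow> (\<forall>x y v w. f (\<lambda>d. x * v d + y * w d) = (\<lambda>d. x * f v d + y * f w d))"

lemma Sv_lin: "lin (Sv a b i j)"
  unfolding lin_def Sv_def aplus_def aminus_def kop_def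
  by (auto simp: fun_eq_iff algebra_simps)

lemma opw_lin: "lin (opw ws)"
proof (induction ws)
  case Nil then show ?case by (simp add: lin_def)
next
  case (Cons c ws)
  obtain a b i j where c: "c = (a,b,i,j)" by (cases c) auto
  show ?case using Cons Sv_lin[of a b i j] unfolding lin_def by (simp add: c Sc_def)
qed

lemma lin_zero: "lin f \<Longrightarrow> f (\<lambda>_. 0) = (\<lambda>_. 0)"
  unfolding lin_def by (drule spec[of _ 0], drule spec[of _ 0]) auto

lemma trace_lin: "trace_qh (\<lambda>v. (\<lambda>d. x * F v d + y * G v d)) = fps_const x * trace_qh F + fps_const y * trace_qh G"
  by (simp add: trace_qh_def fps_eq_iff)

abbreviation Ap :: col where "Ap \<equiv> (0,0,1,0)"
abbreviation Id0 :: col where "Id0 \<equiv> (0,0,0,0)"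

definition isU :: "col \<Rightarrow> bool" where "isU c = (snd (snd (snd c)) = 1)"
definition beta :: "col \<Rightarrow> K" where
  "beta c = (if c = (1,0,0,1) \<or> c = (1,0,1,1) then 1 - tt else 0)"
definition rr :: "col \<Rightarrow> col" where
  "rr c = (if c = (1,0,0,1) then Id0 else Ap)"

definition u :: "col list \<Rightarrow> nat" where "u xs = length (filter isU xs)"

lemma u_append[simp]: "u (xs @ ys) = u xs + u ys" by (simp add: u_def)
lemma u_Cons[simp]: "u (x # ys) = (if isU x then 1 else 0) + u ys" by (simp add: u_def)
lemma u_Nil[simp]: "u [] = 0" by (simp add: u_def)

lemma pw1: "0 < x \<Longrightarrow> (y::K) * y ^ (x - Suc 0) = y ^ x"
  by (metis Suc_pred power_Suc)

lemma step_op: "opw [z, Ap] v = (\<lambda>d. tt ^ u [z] * opw [Ap, z] v d + beta z * opw [rr z] v d)"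
proof -
  obtain a b i j where z: "z = (a,b,i,j)" by (cases z) auto
  show ?thesis
    unfolding z
    by (auto simp: Sc_def Sv_def isU_def beta_def rr_def aplus_def aminus_def kop_def fun_eq_iff
        algebra_simps pw1)
qed

lemma opw_split3: "opw (P @ M @ Q) = opw P \<circ> opw M \<circ> opw Q"
  by (simp add: opw_append o_assoc)

lemma T_step: "T (P @ z # Ap # Q) = fps_const (tt ^ u [z]) * T (P @ Ap # z # Q) + fps_const (beta z) * T (P @ rr z # Q)"
proof -
  have e1: "opw (P @ z # Ap # Q) = (\<lambda>v. (\<lambda>d. tt ^ u [z] * opw (P @ Ap # z # Q) v d + beta z * opw (P @ rr z # Q) v d))"
  proof
    fix v
    have "opw (P @ z # Ap # Q) v = opw P (opw [z, Ap] (opw Q v))"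
      using opw_split3[of P "[z, Ap]" Q] by simp
    also have "\<dots> = opw P (\<lambda>d. tt ^ u [z] * opw [Ap, z] (opw Q v) d + beta z * opw [rr z] (opw Q v) d)"
      by (simp only: step_op)
    also have "\<dots> = (\<lambda>d. tt ^ u [z] * opw P (opw [Ap, z] (opw Q v)) d + beta z * opw P (opw [rr z] (opw Q v)) d)"
      using opw_lin[of P] unfolding lin_def by blast
    also have "\<dots> = (\<lambda>d. tt ^ u [z] * opw (P @ Ap # z # Q) v d + beta z * opw (P @ rr z # Q) v d)"
      using opw_split3[of P "[Ap, z]" Q] opw_split3[of P "[rr z]" Q] by simp
    finally show "opw (P @ z # Ap # Q) v = (\<lambda>d. tt ^ u [z] * opw (P @ Ap # z # Q) v d + beta z * opw (P @ rr z # Q) v d)" .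
  qed
  show ?thesis unfolding T_def e1 trace_lin ..
qed

lemma aplus_basis: "aplus (basis e) = basis (Suc e)"
  by (auto simp: aplus_def basis_def fun_eq_iff)

lemma T_cyc: "T (Ap # Z) = fps_X * T (Z @ [Ap])"
proof -
  have "\<And>d. fps_nth (T (Ap # Z)) d = fps_nth (fps_X * T (Z @ [Ap])) d"
  proof -
    fix d
    show "fps_nth (T (Ap # Z)) d = fps_nth (fps_X * T (Z @ [Ap])) d"
    proof (cases d)
      case 0 then show ?thesis by (simp add: T_def trace_qh_def Sc_def Sv_def aplus_def)
    next
      case (Suc e)
      have "opw (Z @ [Ap]) (basis e) = opw Z (basis (Suc e))"
        by (simp add: opw_append Sc_def Sv_def aplus_basis)
      then show ?thesis using Suc by (simp add: T_def trace_qh_def Sc_def Sv_def aplus_def)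
    qed
  qed
  then show ?thesis by (simp add: fps_eq_iff)
qed

lemma T_move: "T (P @ X @ Ap # Q) = fps_const (tt ^ u X) * T (P @ Ap # X @ Q)
   + (\<Sum>p<length X. fps_const (beta (X ! p) * tt ^ u (drop (Suc p) X)) * T (P @ X[p := rr (X ! p)] @ Q))"
proof (induction X arbitrary: Q rule: rev_induct)
  case Nil then show ?case by simp
next
  case (snoc z X)
  have "T (P @ (X @ [z]) @ Ap # Q) = T ((P @ X) @ z # Ap # Q)" by simp
  also have "\<dots> = fps_const (tt ^ u [z]) * T ((P @ X) @ Ap # z # Q) + fps_const (beta z) * T ((P @ X) @ rr z # Q)"
    by (rule T_step)
  also have "T ((P @ X) @ Ap # z # Q) = T (P @ X @ Ap # (z # Q))" by simp
  also have "\<dots> = fps_const (tt ^ u X) * T (P @ Ap # X @ z # Q)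
   + (\<Sum>p<length X. fps_const (beta (X ! p) * tt ^ u (drop (Suc p) X)) * T (P @ X[p := rr (X ! p)] @ z # Q))"
    by (rule snoc.IH)
  finally have 1: "T (P @ (X @ [z]) @ Ap # Q) = fps_const (tt ^ u [z]) * (fps_const (tt ^ u X) * T (P @ Ap # X @ z # Q)
   + (\<Sum>p<length X. fps_const (beta (X ! p) * tt ^ u (drop (Suc p) X)) * T (P @ X[p := rr (X ! p)] @ z # Q)))
   + fps_const (beta z) * T ((P @ X) @ rr z # Q)" .
  have s: "(\<Sum>p<length (X @ [z]). fps_const (beta ((X @ [z]) ! p) * tt ^ u (drop (Suc p) (X @ [z]))) * T (P @ (X @ [z])[p := rr ((X @ [z]) ! p)] @ Q))
    = (\<Sum>p<length X. fps_const (tt ^ u [z]) * (fps_const (beta (X ! p) * tt ^ u (drop (Suc p) X)) * T (P @ X[p := rr (X ! p)] @ z # Q)))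
      + fps_const (beta z) * T ((P @ X) @ rr z # Q)"
  proof -
    have "\<And>p. p < length X \<Longrightarrow> fps_const (beta ((X @ [z]) ! p) * tt ^ u (drop (Suc p) (X @ [z]))) * T (P @ (X @ [z])[p := rr ((X @ [z]) ! p)] @ Q)
       = fps_const (tt ^ u [z]) * (fps_const (beta (X ! p) * tt ^ u (drop (Suc p) X)) * T (P @ X[p := rr (X ! p)] @ z # Q))"
      by (simp add: nth_append list_update_append power_add mult_ac)
    then have "(\<Sum>p<length X. fps_const (beta ((X @ [z]) ! p) * tt ^ u (drop (Suc p) (X @ [z]))) * T (P @ (X @ [z])[p := rr ((X @ [z]) ! p)] @ Q))
       = (\<Sum>p<length X. fps_const (tt ^ u [z]) * (fps_const (beta (X ! p) * tt ^ u (drop (Suc p) X)) * T (P @ X[p := rr (X ! p)] @ z # Q)))"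
      by (intro sum.cong refl) simp
    moreover have "fps_const (beta ((X @ [z]) ! length X) * tt ^ u (drop (Suc (length X)) (X @ [z]))) * T (P @ (X @ [z])[length X := rr ((X @ [z]) ! length X)] @ Q)
       = fps_const (beta z) * T ((P @ X) @ rr z # Q)"
      by (simp add: list_update_append)
    ultimately show ?thesis by simp
  qed
  show ?case unfolding 1 s by (simp add: distrib_left power_add mult_ac sum_distrib_left fps_const_mult[symmetric] del: fps_const_mult)
qed

lemma T_rec:
  assumes "w = X @ Ap # Y"
  shows "(1 - fps_const (tt ^ (u X + u Y)) * fps_X) * T w =
    (\<Sum>p<length X. fps_const (beta (X ! p) * tt ^ u (drop (Suc p) X)) * T (X[p := rr (X ! p)] @ Y))
    + fps_X * fps_const (tt ^ u X) * (\<Sum>p<length Y. fps_const (beta (Y ! p) * tt ^ u (drop (Suc p) Y)) * T (X @ Y[p := rr (Y ! p)]))"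
proof -
  define S1 where "S1 = (\<Sum>p<length X. fps_const (beta (X ! p) * tt ^ u (drop (Suc p) X)) * T (X[p := rr (X ! p)] @ Y))"
  define S2 where "S2 = (\<Sum>p<length Y. fps_const (beta (Y ! p) * tt ^ u (drop (Suc p) Y)) * T (X @ Y[p := rr (Y ! p)]))"
  have 1: "T w = fps_const (tt ^ u X) * T (Ap # X @ Y) + S1"
    using T_move[of "[]" X Y] unfolding S1_def assms by simp
  have 2: "T (Ap # X @ Y) = fps_X * T (X @ Y @ Ap # [])"
    using T_cyc[of "X @ Y"] by simp
  have 3: "T (X @ Y @ Ap # []) = fps_const (tt ^ u Y) * T w + S2"
    using T_move[of X Y "[]"] unfolding S2_def assms by simp
  have "T w = fps_const (tt ^ u X) * (fps_X * (fps_const (tt ^ u Y) * T w + S2)) + S1"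
    using 1 2 3 by simp
  then have "T w = fps_const (tt ^ (u X + u Y)) * fps_X * T w + (S1 + fps_X * fps_const (tt ^ u X) * S2)"
    by (simp add: algebra_simps power_add fps_const_mult[symmetric] del: fps_const_mult)
  then show ?thesis unfolding S1_def[symmetric] S2_def[symmetric] by (simp add: algebra_simps)
qed

lemma T_Id0: "T (P @ Id0 # Q) = T (P @ Q)"
  by (simp add: T_def opw_append Sc_def Sv_def)

lemma T_zero: assumes "Sc z = (\<lambda>v _. 0)" shows "T (P @ z # Q) = 0"
proof -
  have "opw (P @ z # Q) = (\<lambda>v _. 0)"
    by (rule ext) (simp add: opw_append assms lin_zero[OF opw_lin])
  then show ?thesis by (simp add: T_def trace_qh_def fps_zero_def)
qed

lemma opw_base: "\<forall>c\<in>set w. c = Id0 \<or> c = (0,1,0,1) \<Longrightarrow> opw w v = (\<lambda>e. (tt ^ e) ^ u w * v e)"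
proof (induction w arbitrary: v)
  case Nil then show ?case by simp
next
  case (Cons c w)
  then show ?case by (auto simp: Sc_def Sv_def kop_def isU_def fun_eq_iff power_add mult_ac)
qed

lemma geo: "(1 - fps_const (c::K) * fps_X) * Abs_fps (\<lambda>d. c ^ d) = 1"
proof -
  have "\<And>n. fps_nth ((1 - fps_const c * fps_X) * Abs_fps (\<lambda>d. c ^ d)) n = fps_nth 1 n"
  proof -
    fix n
    have e: "(1 - fps_const c * fps_X) * Abs_fps (\<lambda>d. c ^ d) = Abs_fps (\<lambda>d. c ^ d) - fps_const c * (fps_X * Abs_fps (\<lambda>d. c ^ d))"
      by (simp add: algebra_simps)
    show "fps_nth ((1 - fps_const c * fps_X) * Abs_fps (\<lambda>d. c ^ d)) n = fps_nth 1 n"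
      unfolding e by (cases n) auto
  qed
  then show ?thesis by (simp add: fps_eq_iff)
qed

lemma T_base: assumes "\<forall>c\<in>set w. c = Id0 \<or> c = (0,1,0,1)"
  shows "(1 - fps_const (tt ^ u w) * fps_X) * T w = 1"
proof -
  have "T w = Abs_fps (\<lambda>d. (tt ^ u w) ^ d)"
    using opw_base[OF assms] by (simp add: T_def trace_qh_def basis_def power_mult[symmetric] mult.commute)
  then show ?thesis using geo by simp
qed



definition SumP :: "nat \<Rightarrow> nat list \<Rightarrow> nat list \<Rightarrow> nat set \<Rightarrow> K fps" where
  "SumP L i j A = (\<Sum>cs \<in> {cs. valid_pairing L i j cs \<and> set cs = A}. pairing_wt L i j cs)"

lemma balls_upd: "k < length x \<Longrightarrow> balls L (x[k := 0]) = balls L x - {k}"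
  by (auto simp: balls_def nth_list_update split: if_splits)

lemma lower_list_upd:
  assumes "lower_list L i = c1 # rest" "length i = L"
  shows "lower_list L (i[c1 := 0]) = rest"
proof -
  obtain us vs where uv: "[0..<L] = us @ c1 # vs" "\<forall>k\<in>set us. i ! k \<noteq> 1" "i ! c1 = 1"
    "rest = filter (\<lambda>k. i ! k = 1) vs"
    using assms(1) unfolding lower_list_def filter_eq_Cons_iff by blast
  have d: "distinct (us @ c1 # vs)" using uv(1) by (metis distinct_upt)
  have "c1 \<in> set [0..<L]" unfolding uv(1) by simp
  then have c1L: "c1 < L" by simp
  have "lower_list L (i[c1 := 0]) = filter (\<lambda>k. i[c1 := 0] ! k = 1) (us @ c1 # vs)"
    unfolding lower_list_def uv(1) ..
  also have "\<dots> = filter (\<lambda>k. i ! k = 1) us @ filter (\<lambda>k. i ! k = 1) vs"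
  proof -
    have nu: "c1 \<notin> set us" "c1 \<notin> set vs" using d by auto
    have 1: "filter (\<lambda>k. i[c1 := 0] ! k = 1) us = filter (\<lambda>k. i ! k = 1) us"
      using nu by (intro filter_cong refl) (metis nth_list_update_neq)
    have 2: "filter (\<lambda>k. i[c1 := 0] ! k = 1) vs = filter (\<lambda>k. i ! k = 1) vs"
      using nu by (intro filter_cong refl) (metis nth_list_update_neq)
    show ?thesis using 1 2 c1L assms(2) by simp
  qed
  also have "\<dots> = rest" using uv(2,4) by (simp add: filter_empty_conv)
  finally show ?thesis .
qed

lemma valid_set: "valid_pairing L i j cs \<Longrightarrow> set cs \<subseteq> balls L j"
proof
  fix x assume v: "valid_pairing L i j cs" and x: "x \<in> set cs"
  then obtain k where "k < length cs" "x = cs ! k" by (auto simp: in_set_conv_nth)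
  then show "x \<in> balls L j" using v unfolding valid_pairing_def Let_def by auto
qed

lemma valid_Nil_cons: "lower_list L i = c1 # rest \<Longrightarrow> \<not> valid_pairing L i j []"
  by (simp add: valid_pairing_def)

lemma valid_Cons:
  assumes "lower_list L i = c1 # rest" "length i = L" "length j = L"
  shows "valid_pairing L i j (c' # cs) \<longleftrightarrow>
    c' \<in> balls L j \<and> (c1 \<in> balls L j \<longrightarrow> c' = c1) \<and> valid_pairing L (i[c1 := 0]) (j[c' := 0]) cs"
proof -
  have ll: "lower_list L (i[c1 := 0]) = rest" using lower_list_upd[OF assms(1,2)] .
  have F: "c' \<in> balls L j \<Longrightarrow> balls L j - set (take (Suc k) (c' # cs)) = balls L (j[c' := 0]) - set (take k cs)" for k
    using balls_upd[of c' j L] assms(3) by (auto simp: balls_def)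
  show ?thesis
  proof
    assume v: "valid_pairing L i j (c' # cs)"
    have 0: "c' \<in> balls L j \<and> (c1 \<in> balls L j \<longrightarrow> c' = c1)"
      using v assms(1) unfolding valid_pairing_def Let_def by (auto dest: spec[of _ 0])
    have "valid_pairing L (i[c1 := 0]) (j[c' := 0]) cs"
      unfolding valid_pairing_def Let_def ll
    proof (intro conjI allI impI)
      show "length cs = length rest" using v assms(1) by (simp add: valid_pairing_def)
    next
      fix k assume k: "k < length cs"
      have "Suc k < length (c' # cs)" using k by simp
      then have h: "(c' # cs) ! Suc k \<in> balls L j - set (take (Suc k) (c' # cs)) \<and>
         (lower_list L i ! Suc k \<in> balls L j - set (take (Suc k) (c' # cs)) \<longrightarrow> (c' # cs) ! Suc k = lower_list L i ! Suc k)"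
        using v unfolding valid_pairing_def Let_def by blast
      have h2: "cs ! k \<in> balls L (j[c' := 0]) - set (take k cs) \<and>
         (rest ! k \<in> balls L (j[c' := 0]) - set (take k cs) \<longrightarrow> cs ! k = rest ! k)"
        using h unfolding F[OF conjunct1[OF 0]] assms(1) by simp
      show "cs ! k \<in> balls L (j[c' := 0]) - set (take k cs)" using h2 by blast
      show "rest ! k \<in> balls L (j[c' := 0]) - set (take k cs) \<Longrightarrow> cs ! k = rest ! k" using h2 by blast
    qed
    then show "c' \<in> balls L j \<and> (c1 \<in> balls L j \<longrightarrow> c' = c1) \<and> valid_pairing L (i[c1 := 0]) (j[c' := 0]) cs"
      using 0 by simp
  next
    assume r: "c' \<in> balls L j \<and> (c1 \<in> balls L j \<longrightarrow> c' = c1) \<and> valid_pairing L (i[c1 := 0]) (j[c' := 0]) cs"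
    have r3: "length cs = length rest \<and> (\<forall>k<length cs. cs ! k \<in> balls L (j[c' := 0]) - set (take k cs) \<and>
         (rest ! k \<in> balls L (j[c' := 0]) - set (take k cs) \<longrightarrow> cs ! k = rest ! k))"
      using r unfolding valid_pairing_def Let_def ll by blast
    show "valid_pairing L i j (c' # cs)"
      unfolding valid_pairing_def Let_def
    proof (intro conjI allI impI)
      show "length (c' # cs) = length (lower_list L i)"
        using r3 assms(1) by simp
    next
      fix k assume k: "k < length (c' # cs)"
      have "(c' # cs) ! k \<in> balls L j - set (take k (c' # cs)) \<and>
         (lower_list L i ! k \<in> balls L j - set (take k (c' # cs)) \<longrightarrow> (c' # cs) ! k = lower_list L i ! k)"
      proof (cases k)
        case 0 then show ?thesis using r assms(1) by simp
      next
        case (Suc k')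
        then have "k' < length cs" using k by simp
        then show ?thesis using r3 F[of k'] Suc assms(1) r by simp
      qed
      then show "(c' # cs) ! k \<in> balls L j - set (take k (c' # cs))"
        "lower_list L i ! k \<in> balls L j - set (take k (c' # cs)) \<Longrightarrow> (c' # cs) ! k = lower_list L i ! k"
        by blast+
    qed
  qed
qed

lemma pairing_wt_Cons:
  assumes "lower_list L i = c1 # rest" "length i = L" "c' \<in> balls L j" "length j = L"
  shows "pairing_wt L i j (c' # cs) = choice_wt L c1 c' (balls L j) * pairing_wt L (i[c1 := 0]) (j[c' := 0]) cs"
proof -
  have ll: "lower_list L (i[c1 := 0]) = rest" using lower_list_upd[OF assms(1,2)] .
  have F: "balls L j - set (take (Suc k) (c' # cs)) = balls L (j[c' := 0]) - set (take k cs)" for k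
    using balls_upd[of c' j L] assms(3,4) by (auto simp: balls_def)
  show ?thesis
    unfolding pairing_wt_def ll length_Cons prod.lessThan_Suc_shift
    by (simp add: assms(1) F del: take_Suc_Cons)
qed

lemma finite_valid: "finite {cs. valid_pairing L i j cs \<and> P cs}"
proof -
  have "{cs. valid_pairing L i j cs \<and> P cs} \<subseteq> {cs. set cs \<subseteq> {..<L} \<and> length cs = length (lower_list L i)}"
  proof (clarify)
    fix cs assume v: "valid_pairing L i j cs"
    then have "set cs \<subseteq> {..<L}" using valid_set[OF v] by (auto simp: balls_def)
    then show "set cs \<subseteq> {..<L} \<and> length cs = length (lower_list L i)" using v by (simp add: valid_pairing_def)
  qed
  moreover have "finite {cs. set cs \<subseteq> {..<L} \<and> length cs = length (lower_list L i)}"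
    by (rule finite_lists_length_eq) simp
  ultimately show ?thesis by (rule finite_subset)
qed

lemma SumP_rec:
  assumes "lower_list L i = c1 # rest" "length i = L" "length j = L"
  shows "SumP L i j A = (\<Sum>c' \<in> {c' \<in> balls L j \<inter> A. c1 \<in> balls L j \<longrightarrow> c' = c1}.
            choice_wt L c1 c' (balls L j) * SumP L (i[c1 := 0]) (j[c' := 0]) (A - {c'}))"
proof -
  define C where "C = {c' \<in> balls L j \<inter> A. c1 \<in> balls L j \<longrightarrow> c' = c1}"
  define S' where "S' c' = {cs. valid_pairing L (i[c1 := 0]) (j[c' := 0]) cs \<and> set cs = A - {c'}}" for c'
  have finC: "finite C" unfolding C_def balls_def by auto
  have eq: "{cs. valid_pairing L i j cs \<and> set cs = A} = (\<lambda>(c', cs). c' # cs) ` (SIGMA c':C. S' c')"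
  proof (intro set_eqI iffI)
    fix cs assume "cs \<in> {cs. valid_pairing L i j cs \<and> set cs = A}"
    then have v: "valid_pairing L i j cs" "set cs = A" by auto
    then obtain c' cs' where cs: "cs = c' # cs'" using valid_Nil_cons[OF assms(1)] by (cases cs) auto
    have v2: "c' \<in> balls L j" "c1 \<in> balls L j \<longrightarrow> c' = c1" "valid_pairing L (i[c1 := 0]) (j[c' := 0]) cs'"
      using v(1) valid_Cons[OF assms] cs by auto
    have "c' \<notin> set cs'" using valid_set[OF v2(3)] balls_upd[of c' j L] assms(3) v2(1)
      by (auto simp: balls_def)
    then have "set cs' = A - {c'}" "c' \<in> A" using v(2) cs by auto
    then show "cs \<in> (\<lambda>(c', cs). c' # cs) ` (SIGMA c':C. S' c')"
      using v2 cs unfolding C_def S'_def by force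
  next
    fix cs assume "cs \<in> (\<lambda>(c', cs). c' # cs) ` (SIGMA c':C. S' c')"
    then obtain c' cs' where cs: "cs = c' # cs'" "c' \<in> C" "cs' \<in> S' c'" by auto
    then show "cs \<in> {cs. valid_pairing L i j cs \<and> set cs = A}"
      using valid_Cons[OF assms] unfolding C_def S'_def by auto
  qed
  have inj: "inj_on (\<lambda>(c', cs). c' # cs) (SIGMA c':C. S' c')" by (auto simp: inj_on_def)
  have "SumP L i j A = (\<Sum>x \<in> (SIGMA c':C. S' c'). pairing_wt L i j (fst x # snd x))"
    unfolding SumP_def eq by (subst sum.reindex[OF inj]) (simp add: case_prod_beta)
  also have "\<dots> = (\<Sum>c'\<in>C. \<Sum>cs\<in>S' c'. pairing_wt L i j (c' # cs))"
    by (subst sum.Sigma) (auto simp: finC S'_def finite_valid case_prod_beta)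
  also have "\<dots> = (\<Sum>c'\<in>C. \<Sum>cs\<in>S' c'. choice_wt L c1 c' (balls L j) * pairing_wt L (i[c1 := 0]) (j[c' := 0]) cs)"
    by (intro sum.cong refl pairing_wt_Cons[OF assms(1,2)] assms(3)) (auto simp: C_def)
  also have "\<dots> = (\<Sum>c'\<in>C. choice_wt L c1 c' (balls L j) * SumP L (i[c1 := 0]) (j[c' := 0]) (A - {c'}))"
    by (simp add: SumP_def S'_def sum_distrib_left)
  finally show ?thesis unfolding C_def .
qed



definition cols :: "nat \<Rightarrow> nat list \<Rightarrow> nat list \<Rightarrow> nat list \<Rightarrow> nat list \<Rightarrow> col list" where
  "cols L a b i j = map (\<lambda>k. (a!k, b!k, i!k, j!k)) [0..<L]"

lemma Sprod_cols: "Sprod L a b i j = opw (cols L a b i j)"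
proof -
  have "foldr (\<circ>) (map (\<lambda>k. Sv (a!k) (b!k) (i!k) (j!k)) xs) id = opw (map (\<lambda>k. (a!k, b!k, i!k, j!k)) xs)" for xs
    by (induction xs) (auto simp: Sc_def)
  then show ?thesis unfolding Sprod_def cols_def by simp
qed

lemma Sw_T: "Sw L a b i j = (1 - fps_const (tt ^ (sum_list j - sum_list i)) * fps_X) * T (cols L a b i j)"
  unfolding Sw_def T_def Sprod_cols ..

lemma cols_len[simp]: "length (cols L a b i j) = L"
  by (simp add: cols_def)

lemma cols_nth[simp]: "k < L \<Longrightarrow> cols L a b i j ! k = (a!k, b!k, i!k, j!k)"
  by (simp add: cols_def)

lemma T_id: "Sc z = id \<Longrightarrow> T (P @ z # Q) = T (P @ Q)"
  by (simp add: T_def opw_append)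

lemma u_take: "e \<le> length w \<Longrightarrow> u (take e w) = card {k. k < e \<and> isU (w ! k)}"
proof (induction e)
  case 0 then show ?case by simp
next
  case (Suc e)
  have t: "take (Suc e) w = take e w @ [w ! e]" using Suc.prems by (simp add: take_Suc_conv_app_nth)
  show ?case
  proof (cases "isU (w ! e)")
    case True
    then have "{k. k < Suc e \<and> isU (w ! k)} = insert e {k. k < e \<and> isU (w ! k)}" by (auto simp: less_Suc_eq)
    then show ?thesis using Suc True t by simp
  next
    case False
    then have "{k. k < Suc e \<and> isU (w ! k)} = {k. k < e \<and> isU (w ! k)}" by (auto simp: less_Suc_eq)
    then show ?thesis using Suc False t by simp
  qed
qed

lemma u_dt: assumes "s \<le> e" "e \<le> length w"
  shows "u (drop s (take e w)) = card {k. s \<le> k \<and> k < e \<and> isU (w ! k)}"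
proof -
  have "u (take e w) = u (take s (take e w)) + u (drop s (take e w))"
    by (metis append_take_drop_id u_append)
  also have "take s (take e w) = take s w" using assms by (simp add: min_def)
  finally have 1: "u (take e w) = u (take s w) + u (drop s (take e w))" .
  have 2: "{k. k < e \<and> isU (w ! k)} = {k. k < s \<and> isU (w ! k)} \<union> {k. s \<le> k \<and> k < e \<and> isU (w ! k)}"
    using assms by auto
  have 3: "card {k. k < e \<and> isU (w ! k)} = card {k. k < s \<and> isU (w ! k)} + card {k. s \<le> k \<and> k < e \<and> isU (w ! k)}"
    unfolding 2 by (rule card_Un_disjoint) auto
  show ?thesis using 1 3 u_take[of e w] u_take[of s w] assms by simp
qed

lemma u_cols: assumes "s \<le> e" "e \<le> L"
  shows "u (drop s (take e (cols L a b i j))) = card {k. s \<le> k \<and> k < e \<and> j ! k = 1}"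
proof -
  have "{k. s \<le> k \<and> k < e \<and> isU (cols L a b i j ! k)} = {k. s \<le> k \<and> k < e \<and> j ! k = 1}"
    using assms by (auto simp: isU_def)
  then show ?thesis using u_dt[of s e "cols L a b i j"] assms by simp
qed

lemma u_cols_all: "u (cols L a b i j) = card (balls L j)"
proof -
  have "u (cols L a b i j) = u (drop 0 (take L (cols L a b i j)))" by simp
  also have "\<dots> = card {k. 0 \<le> k \<and> k < L \<and> j ! k = 1}" by (rule u_cols) auto
  also have "{k. 0 \<le> k \<and> k < L \<and> j ! k = 1} = balls L j" by (auto simp: balls_def)
  finally show ?thesis .
qed

definition good :: "nat \<Rightarrow> nat list \<Rightarrow> nat list \<Rightarrow> nat list \<Rightarrow> nat list \<Rightarrow> bool" where
  "good L a b i j \<longleftrightarrow> length a = L \<and> length b = L \<and> length i = L \<and> length j = L \<and>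
     set a \<subseteq> {0,1} \<and> set b \<subseteq> {0,1} \<and> set i \<subseteq> {0,1} \<and> set j \<subseteq> {0,1} \<and> (\<forall>k<L. a!k + b!k = j!k)"

lemma good_nth:
  assumes "good L a b i j" "k < L"
  shows "a!k \<in> {0,1}" "b!k \<in> {0,1}" "i!k \<in> {0,1}" "j!k \<in> {0,1}" "a!k + b!k = j!k"
proof -
  have g: "length a = L" "length b = L" "length i = L" "length j = L" "set a \<subseteq> {0,1}" "set b \<subseteq> {0,1}"
    "set i \<subseteq> {0,1}" "set j \<subseteq> {0,1}" "\<forall>k<L. a!k + b!k = j!k" using assms(1) unfolding good_def by auto
  have "a!k \<in> set a" "b!k \<in> set b" "i!k \<in> set i" "j!k \<in> set j" using g(1-4) assms(2) by auto
  then show "a!k \<in> {0,1}" "b!k \<in> {0,1}" "i!k \<in> {0,1}" "j!k \<in> {0,1}" "a!k + b!k = j!k"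
    using g(5-9) assms(2) by blast+
qed

lemma card_balls_upd:
  assumes "k < L" "length x = L" "x ! k = 1"
  shows "card (balls L (x[k := 0])) = card (balls L x) - 1"
proof -
  have f: "finite (balls L x)" by (simp add: balls_def)
  have "k \<in> balls L x" using assms by (simp add: balls_def)
  then show ?thesis using balls_upd[of k x L] assms f by simp
qed

lemma good_upd:
  assumes "good L a b i j" "c1 < L" "k < L" "a ! k = 1"
  shows "good L (a[k := 0]) b (i[c1 := 0]) (j[k := 0])"
proof -
  have "b ! k = 0" "j ! k = 1" using good_nth[OF assms(1,3)] assms(4) by auto
  then show ?thesis using assms set_update_subset_insert[of a k 0] set_update_subset_insert[of i c1 0]
      set_update_subset_insert[of j k 0]
    unfolding good_def by (auto simp: nth_list_update)
qed

lemma beta_cols: assumes "good L a b i j" "k < L"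
  shows "beta (cols L a b i j ! k) = (if a ! k = 1 then 1 - tt else 0)"
  using good_nth[OF assms] assms(2) by (auto simp: beta_def)

lemma rr_cols: assumes "good L a b i j" "k < L" "a ! k = 1"
  shows "rr (cols L a b i j ! k) = (0, b!k, i!k, 0)"
  using good_nth[OF assms(1,2)] assms(2,3) by (auto simp: rr_def)

lemma cols_upd:
  assumes "good L a b i j" "k < L" "c1 < L" "k \<noteq> c1"
  shows "cols L (a[k:=0]) b (i[c1:=0]) (j[k:=0]) = (cols L a b i j)[c1 := (a!c1, b!c1, 0, j!c1), k := (0, b!k, i!k, 0)]"
  using assms unfolding good_def by (intro nth_equalityI) (auto simp: nth_list_update)

lemma cols_upd_same:
  assumes "good L a b i j" "c1 < L"
  shows "cols L (a[c1:=0]) b (i[c1:=0]) (j[c1:=0]) = (cols L a b i j)[c1 := (0, b!c1, 0, 0)]"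
  using assms unfolding good_def by (intro nth_equalityI) (auto simp: nth_list_update)

lemma split_sum:
  fixes f :: "nat \<Rightarrow> 'a::comm_monoid_add"
  assumes "c1 < L"
  shows "(\<Sum>k<L. f k) = (\<Sum>k<c1. f k) + f c1 + (\<Sum>p<L - Suc c1. f (Suc c1 + p))"
proof -
  have "(\<Sum>k<L. f k) = (\<Sum>k\<in>{0..<Suc c1}. f k) + (\<Sum>k\<in>{Suc c1..<L}. f k)"
    using sum.atLeastLessThan_concat[of 0 "Suc c1" L f] assms by (simp add: lessThan_atLeast0)
  also have "(\<Sum>k\<in>{Suc c1..<L}. f k) = (\<Sum>p\<in>{0..<L - Suc c1}. f (Suc c1 + p))"
    by (subst sum.atLeastLessThan_shift_0) (simp add: comp_def)
  finally show ?thesis by (simp add: lessThan_atLeast0)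
qed



lemma Mw_SumP: "good L a b i j \<Longrightarrow> Mw L a b i j = SumP L i j (balls L a)"
  unfolding Mw_def SumP_def good_def by auto

lemma set_lower: "set (lower_list L i) = balls L i"
  by (auto simp: lower_list_def balls_def)

lemma upd_XY1: "p < length X \<Longrightarrow> (X @ z # Y)[length X := v, p := v'] = X[p := v'] @ v # Y"
  by (simp add: list_update_append)

lemma upd_XY2: "p < length Y \<Longrightarrow> (X @ z # Y)[length X := v, Suc (length X + p) := v'] = X @ v # Y[p := v']"
  by (simp add: list_update_append)

lemma cb1: "p < c1 \<Longrightarrow> c1 \<le> L \<Longrightarrow> balls L j \<inter> between L p c1 = {k. Suc p \<le> k \<and> k < c1 \<and> j!k = 1}"
  by (auto simp: between_def balls_def)

lemma cb2: assumes "c1 < k" "k < L"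
  shows "card (balls L j \<inter> between L k c1) = card {x. Suc k \<le> x \<and> x < L \<and> j!x = 1} + card {x. 0 \<le> x \<and> x < c1 \<and> j!x = 1}"
proof -
  have "balls L j \<inter> between L k c1 = {x. Suc k \<le> x \<and> x < L \<and> j!x = 1} \<union> {x. 0 \<le> x \<and> x < c1 \<and> j!x = 1}"
    using assms by (auto simp: between_def balls_def)
  moreover have "card ({x. Suc k \<le> x \<and> x < L \<and> j!x = 1} \<union> {x. 0 \<le> x \<and> x < c1 \<and> j!x = 1})
     = card {x. Suc k \<le> x \<and> x < L \<and> j!x = 1} + card {x. 0 \<le> x \<and> x < c1 \<and> j!x = 1}"
    using assms by (intro card_Un_disjoint) auto
  ultimately show ?thesis by simp
qed

lemma Sc_zero: "Sc (0,1,1,1) = (\<lambda>v _. 0)"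
  by (simp add: Sc_def Sv_def)

lemma Sc_id: "Sc (1,0,1,1) = id"
  by (simp add: Sc_def Sv_def)

lemma main:
  assumes "good L a b i j" "card (balls L a) = n" "card (balls L i) = n"
  shows "Mw L a b i j = (1 - fps_const (tt ^ (card (balls L j) - n)) * fps_X) * T (cols L a b i j)"
  using assms
proof (induction n arbitrary: a i j)
  case 0
  note g = "0.prems"(1)
  have fin: "finite (balls L x)" for x by (simp add: balls_def)
  have ba: "balls L a = {}" "balls L i = {}" using "0.prems" fin by auto
  have an: "a!k = 0" "i!k = 0" if "k < L" for k
    using good_nth[OF g that] ba that by (auto simp: balls_def)
  have cs: "\<forall>c\<in>set (cols L a b i j). c = Id0 \<or> c = (0,1,0,1)"
  proof
    fix c assume "c \<in> set (cols L a b i j)"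
    then obtain k where k: "k < L" "c = cols L a b i j ! k" by (auto simp: in_set_conv_nth)
    then show "c = Id0 \<or> c = (0,1,0,1)" using good_nth[OF g k(1)] an[OF k(1)] by auto
  qed
  have "lower_list L i = []" using set_lower[of L i] ba by simp
  then have "{cs. valid_pairing L i j cs \<and> set cs = balls L a} = {[]}"
    by (auto simp: valid_pairing_def ba)
  then have "Mw L a b i j = 1" using Mw_SumP[OF g] by (simp add: SumP_def pairing_wt_def)
  then show ?case using T_base[OF cs] u_cols_all[of L a b i j] by simp
next
  case (Suc n)
  note g = Suc.prems(1)
  have lens: "length a = L" "length b = L" "length i = L" "length j = L" using g good_def by auto
  have "balls L i \<noteq> {}" using Suc.prems(3) by auto
  then obtain c1 rest where ll: "lower_list L i = c1 # rest" using set_lower[of L i] by (cases "lower_list L i") auto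
  have "c1 \<in> balls L i" using set_lower[of L i] ll by (metis list.set_intros(1))
  then have c1L: "c1 < L" "i!c1 = 1" by (auto simp: balls_def)
  define w where "w = cols L a b i j"
  define N where "N = (1 - fps_const (tt ^ (card (balls L j) - Suc n)) * fps_X)"
  have aj: "balls L a \<subseteq> balls L j"
  proof
    fix x assume "x \<in> balls L a"
    then have "x < L" "a!x = 1" by (auto simp: balls_def)
    then show "x \<in> balls L j" using good_nth[OF g, of x] by (auto simp: balls_def)
  qed
  have cardj: "Suc n \<le> card (balls L j)"
    using card_mono[OF _ aj] Suc.prems(2) by (simp add: balls_def)
  have IH': "SumP L (i[c1:=0]) (j[k:=0]) (balls L a - {k}) = N * T (cols L (a[k:=0]) b (i[c1:=0]) (j[k:=0]))"
    if k: "k \<in> balls L a" for k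
  proof -
    have kL: "k < L" "a!k = 1" using k by (auto simp: balls_def)
    then have jk: "j!k = 1" using good_nth[OF g kL(1)] by auto
    have g': "good L (a[k:=0]) b (i[c1:=0]) (j[k:=0])" using good_upd[OF g c1L(1) kL] .
    have ca: "card (balls L (a[k:=0])) = n" using card_balls_upd[OF kL(1) lens(1) kL(2)] Suc.prems(2) by simp
    have ci: "card (balls L (i[c1:=0])) = n" using card_balls_upd[OF c1L(1) lens(3) c1L(2)] Suc.prems(3) by simp
    have cj: "card (balls L (j[k:=0])) = card (balls L j) - 1" using card_balls_upd[OF kL(1) lens(4) jk] .
    have "Mw L (a[k:=0]) b (i[c1:=0]) (j[k:=0]) = (1 - fps_const (tt ^ (card (balls L (j[k:=0])) - n)) * fps_X) * T (cols L (a[k:=0]) b (i[c1:=0]) (j[k:=0]))"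
      using Suc.IH[OF g' ca ci] .
    moreover have "card (balls L (j[k:=0])) - n = card (balls L j) - Suc n" using cj by simp
    moreover have "Mw L (a[k:=0]) b (i[c1:=0]) (j[k:=0]) = SumP L (i[c1:=0]) (j[k:=0]) (balls L a - {k})"
      using Mw_SumP[OF g'] balls_upd[of k a L] kL lens by simp
    ultimately show ?thesis unfolding N_def by simp
  qed
  have rec: "Mw L a b i j = (\<Sum>c'\<in>{c' \<in> balls L j \<inter> balls L a. c1 \<in> balls L j \<longrightarrow> c' = c1}.
       choice_wt L c1 c' (balls L j) * (N * T (cols L (a[c':=0]) b (i[c1:=0]) (j[c':=0]))))"
    unfolding Mw_SumP[OF g] SumP_rec[OF ll lens(3) lens(4)]
    by (intro sum.cong refl) (simp add: IH')
  have wd: "w = take c1 w @ w!c1 # drop (Suc c1) w" unfolding w_def by (rule id_take_nth_drop) (simp add: c1L)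
  have wc1: "w!c1 = (a!c1, b!c1, 1, j!c1)" using c1L by (simp add: w_def)
  have wupd: "w[c1 := v] = take c1 w @ v # drop (Suc c1) w" for v
    using c1L by (simp add: upd_conv_take_nth_drop w_def)
  show ?case
  proof (cases "j!c1 = 1")
    case True
    then have c1j: "c1 \<in> balls L j" using c1L by (simp add: balls_def)
    show ?thesis
    proof (cases "a!c1 = 1")
      case True
      have bc: "b!c1 = 0" using good_nth[OF g c1L(1)] True \<open>j!c1 = 1\<close> by auto
      have S: "{c' \<in> balls L j \<inter> balls L a. c1 \<in> balls L j \<longrightarrow> c' = c1} = {c1}"
        using c1j True c1L by (auto simp: balls_def)
      have "Mw L a b i j = N * T (w[c1 := Id0])"
        using rec unfolding S using cols_upd_same[OF g c1L(1)] bc by (simp add: choice_wt_def w_def)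
      also have "T (w[c1 := Id0]) = T (take c1 w @ drop (Suc c1) w)" unfolding wupd by (rule T_Id0)
      also have "\<dots> = T w" using wd wc1 True bc c1L \<open>j!c1 = 1\<close> T_id[OF Sc_id, of "take c1 w" "drop (Suc c1) w"]
        by simp
      finally show ?thesis unfolding N_def w_def using Suc.prems(2) by simp
    next
      case False
      have ac: "a!c1 = 0" "b!c1 = 1" using good_nth[OF g c1L(1)] False \<open>j!c1 = 1\<close> by auto
      have S: "{c' \<in> balls L j \<inter> balls L a. c1 \<in> balls L j \<longrightarrow> c' = c1} = {}"
        using c1j False c1L by (auto simp: balls_def)
      have "T w = 0" using wd wc1 ac c1L \<open>j!c1 = 1\<close> T_zero[OF Sc_zero, of "take c1 w" "drop (Suc c1) w"]
        by simp
      then show ?thesis using rec unfolding S w_def by simp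
    qed
  next
    case False
    have jc: "j!c1 = 0" using good_nth[OF g c1L(1)] False by auto
    have ac: "a!c1 = 0" "b!c1 = 0" using good_nth[OF g c1L(1)] jc by auto
    define X where "X = take c1 w"
    define Y where "Y = drop (Suc c1) w"
    have wXY: "w = X @ Ap # Y" using wd wc1 ac jc c1L unfolding X_def Y_def by simp
    have lenX: "length X = c1" using c1L by (simp add: X_def w_def)
    have lenY: "length Y = L - Suc c1" by (simp add: Y_def w_def)
    have c1nj: "c1 \<notin> balls L j" using jc by (simp add: balls_def)
    have setC: "{c' \<in> balls L j \<inter> balls L a. c1 \<in> balls L j \<longrightarrow> c' = c1} = balls L a"
      using aj c1nj by auto
    define D where "D = 1 - fps_const (tt ^ card (balls L j)) * fps_X"
    have uXY: "u X + u Y = card (balls L j)" using u_cols_all[of L a b i j] wXY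
      by (simp add: w_def isU_def)
    have D0: "fps_nth D 0 \<noteq> 0" by (simp add: D_def)
    define G where "G k = fps_const ((1 - tt) * tt ^ card (balls L j \<inter> between L k c1)) * fps_X ^ (if c1 < k then 1 else 0)
        * T (cols L (a[k:=0]) b (i[c1:=0]) (j[k:=0]))" for k
    have M1: "Mw L a b i j = N * inverse D * (\<Sum>k\<in>balls L a. G k)"
    proof -
      have "Mw L a b i j = (\<Sum>k\<in>balls L a. N * inverse D * G k)"
        unfolding rec setC
      proof (intro sum.cong refl)
        fix k assume k: "k \<in> balls L a"
        then have "k \<noteq> c1" using ac by (auto simp: balls_def)
        then show "choice_wt L c1 k (balls L j) * (N * T (cols L (a[k:=0]) b (i[c1:=0]) (j[k:=0]))) = N * inverse D * G k"
          unfolding choice_wt_def G_def D_def by (simp add: Int_commute mult_ac)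
      qed
      then show ?thesis by (simp add: sum_distrib_left)
    qed
    define S1 where "S1 = (\<Sum>p<length X. fps_const (beta (X ! p) * tt ^ u (drop (Suc p) X)) * T (X[p := rr (X ! p)] @ Y))"
    define S2 where "S2 = (\<Sum>p<length Y. fps_const (beta (Y ! p) * tt ^ u (drop (Suc p) Y)) * T (X @ Y[p := rr (Y ! p)]))"
    have TR: "D * T w = S1 + fps_X * fps_const (tt ^ u X) * S2"
      using T_rec[OF wXY] unfolding D_def S1_def S2_def uXY .
    have Tw: "T w = inverse D * (S1 + fps_X * fps_const (tt ^ u X) * S2)"
    proof -
      have "T w = (inverse D * D) * T w" using inverse_mult_eq_1[OF D0] by simp
      then show ?thesis using TR by (simp add: mult.assoc)
    qed
    define H where "H k = (if k \<in> balls L a then G k else 0)" for k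
    have star: "(\<Sum>k\<in>balls L a. G k) = S1 + fps_X * fps_const (tt ^ u X) * S2"
    proof -
      have ba: "balls L a = {k \<in> {..<L}. k \<in> balls L a}" by (auto simp: balls_def)
      have "(\<Sum>k\<in>balls L a. G k) = (\<Sum>k<L. H k)"
        unfolding H_def by (subst ba) (rule sum.inter_filter[OF finite_lessThan])
      also have "\<dots> = (\<Sum>k<c1. H k) + H c1 + (\<Sum>p<L - Suc c1. H (Suc c1 + p))"
        by (rule split_sum[OF c1L(1)])
      also have "H c1 = 0" unfolding H_def using ac by (simp add: balls_def)
      also have "(\<Sum>k<c1. H k) = S1"
        unfolding S1_def lenX
      proof (intro sum.cong refl)
        fix p assume "p \<in> {..<c1}"
        then have p: "p < c1" by simp
        then have pL: "p < L" using c1L by simp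
        have Xp: "X ! p = w ! p" using p by (simp add: X_def)
        show "H p = fps_const (beta (X ! p) * tt ^ u (drop (Suc p) X)) * T (X[p := rr (X ! p)] @ Y)"
        proof (cases "a!p = 1")
          case True
          have pa: "p \<in> balls L a" using True pL by (simp add: balls_def)
          have ub: "u (drop (Suc p) X) = card (balls L j \<inter> between L p c1)"
            unfolding X_def w_def using u_cols[of "Suc p" c1 L a b i j] p c1L cb1[OF p, of L j] by simp
          have cu: "cols L (a[p:=0]) b (i[c1:=0]) (j[p:=0]) = X[p := rr (X ! p)] @ Id0 # Y"
          proof -
            have "cols L (a[p:=0]) b (i[c1:=0]) (j[p:=0]) = w[c1 := Id0, p := (0, b!p, i!p, 0)]"
              using cols_upd[OF g pL c1L(1)] p ac jc unfolding w_def by simp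
            also have "\<dots> = X[p := (0, b!p, i!p, 0)] @ Id0 # Y"
              using upd_XY1[of p X Ap Y Id0] wXY lenX p by simp
            also have "(0, b!p, i!p, 0) = rr (X ! p)" using rr_cols[OF g pL True] Xp by (simp add: w_def)
            finally show ?thesis .
          qed
          have be: "beta (X ! p) = 1 - tt" using beta_cols[OF g pL] True Xp unfolding w_def by simp
          have "H p = G p" using pa by (simp add: H_def)
          also have "G p = fps_const ((1 - tt) * tt ^ u (drop (Suc p) X)) * T (X[p := rr (X ! p)] @ Id0 # Y)"
            unfolding G_def using p ub cu by simp
          also have "\<dots> = fps_const (beta (X ! p) * tt ^ u (drop (Suc p) X)) * T (X[p := rr (X ! p)] @ Y)"
            using be T_Id0[of "X[p := rr (X ! p)]" Y] by simp
          finally show ?thesis .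
        next
          case False
          have "beta (X ! p) = 0" using beta_cols[OF g pL] False Xp unfolding w_def by simp
          moreover have "p \<notin> balls L a" using False by (simp add: balls_def)
          ultimately show ?thesis unfolding H_def by simp
        qed
      qed
      also have "(\<Sum>p<L - Suc c1. H (Suc c1 + p)) = fps_X * fps_const (tt ^ u X) * S2"
        unfolding S2_def lenY sum_distrib_left
      proof (intro sum.cong refl)
        fix p assume "p \<in> {..<L - Suc c1}"
        then have p: "p < L - Suc c1" by simp
        define k where "k = Suc c1 + p"
        have kL: "k < L" "c1 < k" using p by (auto simp: k_def)
        have Yp: "Y ! p = w ! k" using p c1L by (simp add: Y_def k_def w_def)
        show "H (Suc c1 + p) = fps_X * fps_const (tt ^ u X) * (fps_const (beta (Y ! p) * tt ^ u (drop (Suc p) Y)) * T (X @ Y[p := rr (Y ! p)]))"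
        proof (cases "a!k = 1")
          case True
          have ka: "k \<in> balls L a" using True kL by (simp add: balls_def)
          have uY: "u (drop (Suc p) Y) = card {x. Suc k \<le> x \<and> x < L \<and> j!x = 1}"
          proof -
            have "drop (Suc p) Y = drop (Suc k) (take L w)" by (simp add: Y_def k_def w_def add.commute)
            then show ?thesis using u_cols[of "Suc k" L L a b i j] kL unfolding w_def by simp
          qed
          have uX: "u X = card {x. 0 \<le> x \<and> x < c1 \<and> j!x = 1}"
            using u_cols[of 0 c1 L a b i j] c1L unfolding X_def w_def by simp
          have cu: "cols L (a[k:=0]) b (i[c1:=0]) (j[k:=0]) = X @ Id0 # Y[p := rr (Y ! p)]"
          proof -
            have "cols L (a[k:=0]) b (i[c1:=0]) (j[k:=0]) = w[c1 := Id0, k := (0, b!k, i!k, 0)]"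
              using cols_upd[OF g kL(1) c1L(1)] kL ac jc unfolding w_def by simp
            also have "\<dots> = X @ Id0 # Y[p := (0, b!k, i!k, 0)]"
              using upd_XY2[of p Y X Ap Id0] wXY lenX lenY p unfolding k_def by simp
            also have "(0, b!k, i!k, 0) = rr (Y ! p)" using rr_cols[OF g kL(1) True] Yp by (simp add: w_def)
            finally show ?thesis .
          qed
          have T2: "T (X @ Id0 # Y[p := rr (Y ! p)]) = T (X @ Y[p := rr (Y ! p)])" by (rule T_Id0)
          have be: "beta (Y ! p) = 1 - tt" using beta_cols[OF g kL(1)] True Yp by (simp add: w_def)
          have "H (Suc c1 + p) = G k" using ka by (simp add: H_def k_def)
          also have "G k = fps_const ((1 - tt) * tt ^ (u (drop (Suc p) Y) + u X)) * fps_X * T (X @ Id0 # Y[p := rr (Y ! p)])"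
            unfolding G_def using kL cb2[OF kL(2) kL(1), of j] uY uX cu by simp
          also have "\<dots> = fps_X * fps_const (tt ^ u X) * (fps_const (beta (Y ! p) * tt ^ u (drop (Suc p) Y)) * T (X @ Y[p := rr (Y ! p)]))"
            unfolding T2 be by (simp add: power_add fps_const_mult[symmetric] mult_ac del: fps_const_mult)
          finally show ?thesis .
        next
          case False
          have "beta (Y ! p) = 0" using beta_cols[OF g kL(1)] False Yp unfolding w_def by simp
          moreover have "k \<notin> balls L a" using False by (simp add: balls_def)
          ultimately show ?thesis unfolding H_def k_def[symmetric] by simp
        qed
      qed
      finally show ?thesis by simp
    qed
    have "Mw L a b i j = N * T w" using M1 star Tw by (simp add: mult.assoc)
    then show ?thesis unfolding N_def w_def .
  qed
qed



lemma sum_card: assumes "length x = L" "set x \<subseteq> {0,1}" shows "sum_list x = card (balls L x)"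
proof -
  have "sum_list x = (\<Sum>k\<in>{0..<L}. x ! k)" using assms(1) by (simp add: sum_list_sum_nth)
  also have "\<dots> = (\<Sum>k\<in>{..<L}. if x ! k = 1 then 1 else 0)"
  proof (rule sum.cong)
    show "{0..<L} = {..<L}" by auto
    fix k assume "k \<in> {..<L}"
    then have "x ! k \<in> set x" using assms(1) by simp
    then show "x ! k = (if x ! k = 1 then 1 else 0)" using assms(2) by auto
  qed
  also have "\<dots> = (\<Sum>k\<in>{k \<in> {..<L}. x ! k = 1}. 1)" by (rule sum.inter_filter[symmetric]) simp
  also have "\<dots> = card (balls L x)" by (simp add: balls_def)
  finally show ?thesis .
qed

theorem theorem4p1:
  fixes L l m :: nat and i a j b :: "nat list"
  assumes "L \<ge> 1" and "l < m" and "m \<le> L"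
    and "i \<in> Bset L l" and "a \<in> Bset L l" and "j \<in> Bset L m" and "b \<in> Bset L (m - l)"
  shows "Mw L a b i j = Sw L a b i j"
proof -
  have h: "length i = L" "set i \<subseteq> {0,1}" "sum_list i = l" "length a = L" "set a \<subseteq> {0,1}" "sum_list a = l"
    "length j = L" "set j \<subseteq> {0,1}" "sum_list j = m" "length b = L" "set b \<subseteq> {0,1}"
    using assms(4-7) by (auto simp: Bset_def)
  show ?thesis
  proof (cases "\<forall>k<L. a!k + b!k = j!k")
    case True
    have g: "good L a b i j" using h True by (simp add: good_def)
    have ca: "card (balls L a) = l" using sum_card[OF h(4,5)] h(6) by simp
    have ci: "card (balls L i) = l" using sum_card[OF h(1,2)] h(3) by simp
    have cj: "card (balls L j) = m" using sum_card[OF h(7,8)] h(9) by simp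
    show ?thesis using main[OF g ca ci] Sw_T[of L a b i j] h(3,9) cj by simp
  next
    case False
    then obtain k where k: "k < L" "a!k + b!k \<noteq> j!k" by auto
    have mw: "Mw L a b i j = 0" unfolding Mw_def using False by (simp only: if_False)
    have sc: "Sc (cols L a b i j ! k) = (\<lambda>v _. 0)"
      using k by (auto simp: Sc_def Sv_def)
    have "cols L a b i j = take k (cols L a b i j) @ cols L a b i j ! k # drop (Suc k) (cols L a b i j)"
      by (rule id_take_nth_drop) (simp add: k)
    then have "T (cols L a b i j) = 0" using T_zero[OF sc] by metis
    then show ?thesis using mw Sw_T[of L a b i j] by simp
  qed
qed

end
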